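(* Let $X=\{1,\dots,n\}$, $Y$ finite, $Q$ a symmetric irreducible stochastic matrix on $Y$ (notation in context). Let $2\le k\le n-1$, let $\underline a=(a_0,\dots,a_m)$ be a type with $a_0+\cdots+a_m=k+1$ and $a_0\ge1$, $\underline a'=(a_0-1,a_1,\dots,a_m)$, $A\subseteq X$ with $|A|=k$, and $F\in P_{k,\underline a',A}$. Then $$D_{k+1,\underline a}D^*_{k+1,\underline a}F-D^*_{k,\underline a'}D_{k,\underline a'}F=|Y|\,(n+\ell(\underline a)-2k)\,F.$$
   Context: $Q$ acts on $L(Y)$ by $(Qf)(y)=\sum_{y'}q(y,y')f(y')$, with distinct eigenvalues $\lambda_0=1,\dots,\lambda_m$ and eigenspaces $W_0$ (constants), $W_1,\dots,W_m$. $\Theta_k$: functions $\theta$ with $\mathrm{dom}(\theta)$ a $k$-subset of $X$ and values in $Y$; $\varphi\subseteq\theta$ means $\mathrm{dom}\varphi\subseteq\mathrm{dom}\theta$ and $\theta|_{\mathrm{dom}\varphi}=\varphi$. $D_k:L(\Theta_k)\to L(\Theta_{k-1})$, $(D_kF)(\varphi)=\sum_{\theta\supseteq\varphi}F(\theta)$; $D_k^*:L(\Theta_{k-1})\to L(\Theta_k)$, $(D_k^*F)(\theta)=\sum_{\varphi\subseteq\theta}F(\varphi)$. Types $\underline b=(b_0,\dots,b_m)$ of nonnegative integers, $\ell(\underline b)=b_1+\cdots+b_m$, $\underline b'=(b_0-1,b_1,\dots,b_m)$. A fundamental function of type $\underline b$ on a $k$-set $A$ is $F=\bigotimes_{j\in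 A}F^j$ ($F(\theta)=\prod_{j\in A}F^j(\theta(j))$ on $Y^A$, $0$ elsewhere) with each $F^j$ in some $W_{i_j}$ and exactly $b_i$ indices with $i_j=i$; $P_{k,\underline b,A}$ is their span, $P_{k,\underline b}=\bigoplus_AP_{k,\underline b,A}$ ($\{0\}$ if an entry is negative). $D_{k,\underline b}$ is $D_k$ restricted to $P_{k,\underline b}$ and $D^*_{k,\underline b}$ is $D^*_k$ restricted to $P_{k-1,\underline b'}$. *)

theory Defs
  imports Complex_Main
begin

definition Qop :: "('y::finite \<Rightarrow> 'y \<Rightarrow> real) \<Rightarrow> ('y \<Rightarrow> real) \<Rightarrow> 'y \<Rightarrow> real" where
  "Qop Q f y = (\<Sum>y'\<in>UNIV. Q y y' * f y')"

definition symmetric_mat :: "('y \<Rightarrow> 'y \<Rightarrow> real) \<Rightarrow> bool" where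
  "symmetric_mat Q \<longleftrightarrow> (\<forall>x y. Q x y = Q y x)"

definition stochastic_mat :: "('y::finite \<Rightarrow> 'y \<Rightarrow> real) \<Rightarrow> bool" where
  "stochastic_mat Q \<longleftrightarrow> (\<forall>x y. Q x y \<ge> 0) \<and> (\<forall>x. (\<Sum>y\<in>UNIV. Q x y) = 1)"

definition irreducible_mat :: "('y \<Rightarrow> 'y \<Rightarrow> real) \<Rightarrow> bool" where
  "irreducible_mat Q \<longleftrightarrow> (\<forall>x y. (x, y) \<in> {(u, v). Q u v > 0}\<^sup>*)"

definition is_eigenvalue :: "('y::finite \<Rightarrow> 'y \<Rightarrow> real) \<Rightarrow> real \<Rightarrow> bool" where
  "is_eigenvalue Q c \<longleftrightarrow> (\<exists>f. f \<noteq> (\<lambda>_. 0) \<and> Qop Q f = (\<lambda>y. c * f y))"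

definition eigsp :: "('y::finite \<Rightarrow> 'y \<Rightarrow> real) \<Rightarrow> real \<Rightarrow> ('y \<Rightarrow> real) set" where
  "eigsp Q c = {f. Qop Q f = (\<lambda>y. c * f y)}"

definition Theta :: "nat \<Rightarrow> nat \<Rightarrow> (nat \<rightharpoonup> 'y) set" where
  "Theta n k = {\<theta>. dom \<theta> \<subseteq> {1..n} \<and> card (dom \<theta>) = k}"

definition Dop :: "nat \<Rightarrow> nat \<Rightarrow> ((nat \<rightharpoonup> 'y) \<Rightarrow> real) \<Rightarrow> (nat \<rightharpoonup> 'y) \<Rightarrow> real" where
  "Dop n k F \<phi> = (if \<phi> \<in> Theta n (k - 1)
      then (\<Sum>\<theta>\<in>{\<theta> \<in> Theta n k. \<phi> \<subseteq>\<^sub>m \<theta>}. F \<theta>) else 0)"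

definition Dstar :: "nat \<Rightarrow> nat \<Rightarrow> ((nat \<rightharpoonup> 'y) \<Rightarrow> real) \<Rightarrow> (nat \<rightharpoonup> 'y) \<Rightarrow> real" where
  "Dstar n k F \<theta> = (if \<theta> \<in> Theta n k
      then (\<Sum>\<phi>\<in>{\<phi> \<in> Theta n (k - 1). \<phi> \<subseteq>\<^sub>m \<theta>}. F \<phi>) else 0)"

definition tensor :: "nat set \<Rightarrow> (nat \<Rightarrow> 'y \<Rightarrow> real) \<Rightarrow> (nat \<rightharpoonup> 'y) \<Rightarrow> real" where
  "tensor A Fs \<theta> = (if dom \<theta> = A then (\<Prod>j\<in>A. Fs j (the (\<theta> j))) else 0)"

text \<open>Fundamental function of type b (b : {0..m} -> nat) on the set A, w.r.t.
  the enumeration lam 0 = 1, lam 1, ..., lam m of the distinct eigenvalues of Q.\<close>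
definition fundamental ::
  "('y::finite \<Rightarrow> 'y \<Rightarrow> real) \<Rightarrow> (nat \<Rightarrow> real) \<Rightarrow> nat \<Rightarrow> (nat \<Rightarrow> nat) \<Rightarrow> nat set
     \<Rightarrow> ((nat \<rightharpoonup> 'y) \<Rightarrow> real) \<Rightarrow> bool" where
  "fundamental Q lam m b A F \<longleftrightarrow>
     (\<exists>Fs idx. (\<forall>j\<in>A. idx j \<le> m \<and> Fs j \<in> eigsp Q (lam (idx j)))
        \<and> (\<forall>i\<le>m. card {j\<in>A. idx j = i} = b i)
        \<and> F = tensor A Fs)"

definition Pspace ::
  "('y::finite \<Rightarrow> 'y \<Rightarrow> real) \<Rightarrow> (nat \<Rightarrow> real) \<Rightarrow> nat \<Rightarrow> (nat \<Rightarrow> nat) \<Rightarrow> nat set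
     \<Rightarrow> ((nat \<rightharpoonup> 'y) \<Rightarrow> real) set" where
  "Pspace Q lam m b A = {F. \<exists>S c. finite S \<and> S \<subseteq> {G. fundamental Q lam m b A G}
        \<and> F = (\<lambda>\<theta>. \<Sum>G\<in>S. c G * G \<theta>)}"

definition ell :: "nat \<Rightarrow> (nat \<Rightarrow> nat) \<Rightarrow> nat" where
  "ell m b = (\<Sum>i\<in>{1..m}. b i)"

end

theory Submission imports Defs begin

lemma theta_fin: "\<phi> \<in> Theta n k \<Longrightarrow> finite (dom \<phi>)"
  unfolding Theta_def using finite_subset by blast

lemma theta_ins:
  assumes "\<phi> \<in> Theta n k" "x \<in> {1..n}" "x \<notin> dom \<phi>"
  shows "\<phi>(x\<mapsto>y) \<in> Theta n (Suc k)"
  using assms theta_fin[OF assms(1)] by (auto simp: Theta_def)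

lemma theta_del:
  assumes "\<theta> \<in> Theta n (Suc k)" "j \<in> dom \<theta>"
  shows "\<theta>(j:=None) \<in> Theta n k"
  using assms theta_fin[OF assms(1)] by (auto simp: Theta_def card_Diff_singleton)

lemma L1set:
  assumes "\<phi> \<in> Theta n k"
  shows "{\<theta> \<in> Theta n (Suc k). \<phi> \<subseteq>\<^sub>m \<theta>} = (\<lambda>(x,y). \<phi>(x\<mapsto>y)) ` (({1..n} - dom \<phi>) \<times> UNIV)"
proof (intro equalityI subsetI)
  fix \<theta> assume "\<theta> \<in> {\<theta> \<in> Theta n (Suc k). \<phi> \<subseteq>\<^sub>m \<theta>}"
  then have t: "dom \<theta> \<subseteq> {1..n}" "card (dom \<theta>) = Suc k" and le: "\<phi> \<subseteq>\<^sub>m \<theta>" by (auto simp: Theta_def)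
  have fd: "finite (dom \<theta>)" using t(1) finite_subset by blast
  have sub: "dom \<phi> \<subseteq> dom \<theta>" using le map_le_implies_dom_le by blast
  have cp: "card (dom \<phi>) = k" using assms Theta_def by auto
  have "card (dom \<theta> - dom \<phi>) = 1" using card_Diff_subset[OF finite_subset[OF sub fd] sub] t cp by simp
  then obtain x where x: "dom \<theta> - dom \<phi> = {x}" using card_1_singletonE by blast
  then have xin: "x \<in> dom \<theta>" "x \<notin> dom \<phi>" by auto
  have "\<theta> = \<phi>(x \<mapsto> the (\<theta> x))"
  proof
    fix z show "\<theta> z = (\<phi>(x \<mapsto> the (\<theta> x))) z"
    proof (cases "z = x")
      case True then show ?thesis using xin by auto
    next
      case False
      show ?thesis
      proof (cases "z \<in> dom \<phi>")
        case True then show ?thesis using le False by (auto simp: map_le_def)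
      next
        case f2: False
        then have "z \<notin> dom \<theta>" using x False by auto
        then show ?thesis using f2 False by (simp add: domIff)
      qed
    qed
  qed
  moreover have "x \<in> {1..n}" using xin t by auto
  ultimately show "\<theta> \<in> (\<lambda>(x,y). \<phi>(x\<mapsto>y)) ` (({1..n} - dom \<phi>) \<times> UNIV)"
    using xin by (intro rev_image_eqI[of "(x, the (\<theta> x))"]) auto
next
  fix \<theta> assume "\<theta> \<in> (\<lambda>(x,y). \<phi>(x\<mapsto>y)) ` (({1..n} - dom \<phi>) \<times> UNIV)"
  then obtain p where p: "p \<in> ({1..n} - dom \<phi>) \<times> UNIV" "\<theta> = (\<lambda>(x,y). \<phi>(x\<mapsto>y)) p" by blast
  obtain x y where "p = (x,y)" by fastforce
  then have xy0: "(x,y) \<in> ({1..n} - dom \<phi>) \<times> UNIV" "\<theta> = \<phi>(x\<mapsto>y)" using p by auto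
  then have xy: "x \<in> {1..n}" "x \<notin> dom \<phi>" "\<theta> = \<phi>(x\<mapsto>y)" by blast+
  have "\<phi> \<subseteq>\<^sub>m \<phi>(x\<mapsto>y)" using xy(2) by (auto simp: map_le_def)
  then show "\<theta> \<in> {\<theta> \<in> Theta n (Suc k). \<phi> \<subseteq>\<^sub>m \<theta>}" using xy theta_ins[OF assms] by auto
qed

lemma L1inj: "inj_on (\<lambda>(x,y). \<phi>(x\<mapsto>y)) ((S - dom \<phi>) \<times> UNIV)"
proof (rule inj_onI)
  fix p q assume pq: "p \<in> (S - dom \<phi>) \<times> UNIV" "q \<in> (S - dom \<phi>) \<times> UNIV"
    "(\<lambda>(x,y). \<phi>(x\<mapsto>y)) p = (\<lambda>(x,y). \<phi>(x\<mapsto>y)) q"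
  obtain x y where p: "p = (x,y)" by fastforce
  obtain x' y' where q: "q = (x',y')" by fastforce
  have a: "x \<notin> dom \<phi>" "\<phi>(x\<mapsto>y) = \<phi>(x'\<mapsto>y')" using pq p q by auto
  then have "dom (\<phi>(x\<mapsto>y)) = dom (\<phi>(x'\<mapsto>y'))" by simp
  then have "x \<in> insert x' (dom \<phi>)" by (metis dom_fun_upd insertI1 option.simps(3))
  then have "x = x'" using a(1) by blast
  moreover have "(\<phi>(x\<mapsto>y)) x = (\<phi>(x'\<mapsto>y')) x" using a(2) by simp
  ultimately show "p = q" using p q by simp
qed

lemma Dop_eq:
  fixes F :: "(nat \<rightharpoonup> 'y::finite) \<Rightarrow> real"
  assumes "\<phi> \<in> Theta n k"
  shows "Dop n (Suc k) F \<phi> = (\<Sum>x\<in>{1..n} - dom \<phi>. \<Sum>y\<in>UNIV. F (\<phi>(x\<mapsto>y)))"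
proof -
  have "Dop n (Suc k) F \<phi> = (\<Sum>\<theta>\<in>{\<theta> \<in> Theta n (Suc k). \<phi> \<subseteq>\<^sub>m \<theta>}. F \<theta>)"
    using assms by (simp add: Dop_def)
  also have "\<dots> = (\<Sum>p\<in>({1..n} - dom \<phi>) \<times> (UNIV::'y set). F (\<phi>(fst p\<mapsto>snd p)))"
    unfolding L1set[OF assms] by (subst sum.reindex[OF L1inj]) (simp add: case_prod_beta)
  also have "\<dots> = (\<Sum>x\<in>{1..n} - dom \<phi>. \<Sum>y\<in>UNIV. F (\<phi>(x\<mapsto>y)))"
    by (simp add: sum.cartesian_product case_prod_beta)
  finally show ?thesis .
qed

lemma L2set:
  assumes "\<theta> \<in> Theta n (Suc k)"
  shows "{\<phi> \<in> Theta n k. \<phi> \<subseteq>\<^sub>m \<theta>} = (\<lambda>j. \<theta>(j:=None)) ` dom \<theta>"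
proof (intro equalityI subsetI)
  fix \<phi> assume "\<phi> \<in> {\<phi> \<in> Theta n k. \<phi> \<subseteq>\<^sub>m \<theta>}"
  then have cp: "card (dom \<phi>) = k" and le: "\<phi> \<subseteq>\<^sub>m \<theta>" by (auto simp: Theta_def)
  have fd: "finite (dom \<theta>)" using theta_fin[OF assms] .
  have t: "card (dom \<theta>) = Suc k" using assms by (simp add: Theta_def)
  have sub: "dom \<phi> \<subseteq> dom \<theta>" using le map_le_implies_dom_le by blast
  have "card (dom \<theta> - dom \<phi>) = 1" using card_Diff_subset[OF finite_subset[OF sub fd] sub] t cp by simp
  then obtain j where x: "dom \<theta> - dom \<phi> = {j}" using card_1_singletonE by blast
  then have jin: "j \<in> dom \<theta>" "j \<notin> dom \<phi>" by auto
  have "\<phi> = \<theta>(j:=None)"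
  proof
    fix z show "\<phi> z = (\<theta>(j:=None)) z"
    proof (cases "z = j")
      case True then show ?thesis using jin by auto
    next
      case False
      show ?thesis
      proof (cases "z \<in> dom \<phi>")
        case True then show ?thesis using le False by (auto simp: map_le_def)
      next
        case f2: False
        then have "z \<notin> dom \<theta>" using x False by auto
        then show ?thesis using f2 False by (simp add: domIff)
      qed
    qed
  qed
  then show "\<phi> \<in> (\<lambda>j. \<theta>(j:=None)) ` dom \<theta>" using jin by auto
next
  fix \<phi> assume "\<phi> \<in> (\<lambda>j. \<theta>(j:=None)) ` dom \<theta>"
  then obtain j where j: "j \<in> dom \<theta>" "\<phi> = \<theta>(j:=None)" by auto
  have "\<theta>(j:=None) \<subseteq>\<^sub>m \<theta>" by (auto simp: map_le_def)
  then show "\<phi> \<in> {\<phi> \<in> Theta n k. \<phi> \<subseteq>\<^sub>m \<theta>}" using j theta_del[OF assms] by auto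
qed

lemma L2inj: "inj_on (\<lambda>j. \<theta>(j:=None)) (dom \<theta>)"
proof (rule inj_onI)
  fix j j' assume a: "j \<in> dom \<theta>" "j' \<in> dom \<theta>" "\<theta>(j:=None) = \<theta>(j':=None)"
  then have "(\<theta>(j:=None)) j = (\<theta>(j':=None)) j" by simp
  then show "j = j'" using a(1) by (auto split: if_splits)
qed

lemma Dstar_eq:
  assumes "\<theta> \<in> Theta n (Suc k)"
  shows "Dstar n (Suc k) H \<theta> = (\<Sum>j\<in>dom \<theta>. H (\<theta>(j:=None)))"
proof -
  have "Dstar n (Suc k) H \<theta> = (\<Sum>\<phi>\<in>{\<phi> \<in> Theta n k. \<phi> \<subseteq>\<^sub>m \<theta>}. H \<phi>)"
    using assms by (simp add: Dstar_def)
  also have "\<dots> = (\<Sum>j\<in>dom \<theta>. H (\<theta>(j:=None)))"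
    unfolding L2set[OF assms] by (subst sum.reindex[OF L2inj]) simp
  finally show ?thesis .
qed

lemma main_comb:
  fixes F :: "(nat \<rightharpoonup> 'y::finite) \<Rightarrow> real"
  assumes th: "\<theta> \<in> Theta n (Suc k0)"
  shows "Dop n (Suc (Suc k0)) (Dstar n (Suc (Suc k0)) F) \<theta> - Dstar n (Suc k0) (Dop n (Suc k0) F) \<theta>
        = real (card ({1..n} - dom \<theta>)) * real (card (UNIV::'y set)) * F \<theta> - (\<Sum>j\<in>dom \<theta>. \<Sum>y\<in>UNIV. F (\<theta>(j\<mapsto>y)))"
proof -
  define X where "X = {1..n::nat}"
  define T where "T = dom \<theta>"
  have fT: "finite T" using theta_fin[OF th] T_def by simp
  have TX: "T \<subseteq> X" using th by (simp add: Theta_def T_def X_def)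
  define S where "S = (\<Sum>x\<in>X-T. \<Sum>y\<in>(UNIV::'y set). \<Sum>j\<in>T. F (\<theta>(j:=None, x\<mapsto>y)))"
  have "Dop n (Suc (Suc k0)) (Dstar n (Suc (Suc k0)) F) \<theta>
      = (\<Sum>x\<in>X-T. \<Sum>y\<in>UNIV. Dstar n (Suc (Suc k0)) F (\<theta>(x\<mapsto>y)))"
    using Dop_eq[OF th] X_def T_def by simp
  also have "\<dots> = (\<Sum>x\<in>X-T. \<Sum>y\<in>(UNIV::'y set). F \<theta> + (\<Sum>j\<in>T. F (\<theta>(j:=None, x\<mapsto>y))))"
  proof (intro sum.cong refl)
    fix x y assume x: "x \<in> X - T"
    have "Dstar n (Suc (Suc k0)) F (\<theta>(x\<mapsto>y)) = (\<Sum>j\<in>insert x T. F ((\<theta>(x\<mapsto>y))(j:=None)))"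
      using Dstar_eq[OF theta_ins[OF th, of x y]] x X_def T_def by simp
    also have "\<dots> = F ((\<theta>(x\<mapsto>y))(x:=None)) + (\<Sum>j\<in>T. F ((\<theta>(x\<mapsto>y))(j:=None)))"
      using x fT by (simp add: sum.insert)
    also have "(\<theta>(x\<mapsto>y))(x:=None) = \<theta>" using x T_def by (auto simp: domIff)
    also have "(\<Sum>j\<in>T. F ((\<theta>(x\<mapsto>y))(j:=None))) = (\<Sum>j\<in>T. F (\<theta>(j:=None, x\<mapsto>y)))"
    proof (intro sum.cong refl)
      fix j assume "j \<in> T" then have "j \<noteq> x" using x by auto
      then show "F ((\<theta>(x\<mapsto>y))(j:=None)) = F (\<theta>(j:=None, x\<mapsto>y))" by (simp add: fun_upd_twist)
    qed
    finally show "Dstar n (Suc (Suc k0)) F (\<theta>(x\<mapsto>y)) = F \<theta> + (\<Sum>j\<in>T. F (\<theta>(j:=None, x\<mapsto>y)))" .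
  qed
  also have "\<dots> = real (card (X-T)) * real (card (UNIV::'y set)) * F \<theta> + S"
    by (simp add: sum.distrib S_def)
  finally have L1: "Dop n (Suc (Suc k0)) (Dstar n (Suc (Suc k0)) F) \<theta> = real (card (X-T)) * real (card (UNIV::'y set)) * F \<theta> + S" .
  have "Dstar n (Suc k0) (Dop n (Suc k0) F) \<theta> = (\<Sum>j\<in>T. Dop n (Suc k0) F (\<theta>(j:=None)))"
    using Dstar_eq[OF th] T_def by simp
  also have "\<dots> = (\<Sum>j\<in>T. (\<Sum>y\<in>UNIV. F (\<theta>(j\<mapsto>y))) + (\<Sum>x\<in>X-T. \<Sum>y\<in>UNIV. F (\<theta>(j:=None, x\<mapsto>y))))"
  proof (intro sum.cong refl)
    fix j assume j: "j \<in> T"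
    have "Dop n (Suc k0) F (\<theta>(j:=None)) = (\<Sum>x\<in>X - (T - {j}). \<Sum>y\<in>UNIV. F (\<theta>(j:=None, x\<mapsto>y)))"
      using Dop_eq[OF theta_del[OF th, of j]] j X_def T_def by simp
    also have "X - (T - {j}) = insert j (X - T)" using j TX by auto
    also have "(\<Sum>x\<in>insert j (X - T). \<Sum>y\<in>UNIV. F (\<theta>(j:=None, x\<mapsto>y)))
       = (\<Sum>y\<in>UNIV. F (\<theta>(j\<mapsto>y))) + (\<Sum>x\<in>X-T. \<Sum>y\<in>UNIV. F (\<theta>(j:=None, x\<mapsto>y)))"
      using j X_def by (simp add: sum.insert)
    finally show "Dop n (Suc k0) F (\<theta>(j:=None)) = (\<Sum>y\<in>UNIV. F (\<theta>(j\<mapsto>y))) + (\<Sum>x\<in>X-T. \<Sum>y\<in>UNIV. F (\<theta>(j:=None, x\<mapsto>y)))" .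
  qed
  also have "\<dots> = (\<Sum>j\<in>T. \<Sum>y\<in>UNIV. F (\<theta>(j\<mapsto>y))) + S"
  proof -
    have "(\<Sum>j\<in>T. \<Sum>x\<in>X-T. \<Sum>y\<in>(UNIV::'y set). F (\<theta>(j:=None, x\<mapsto>y)))
        = (\<Sum>x\<in>X-T. \<Sum>j\<in>T. \<Sum>y\<in>(UNIV::'y set). F (\<theta>(j:=None, x\<mapsto>y)))"
      by (rule sum.swap)
    also have "\<dots> = S" unfolding S_def by (intro sum.cong refl sum.swap)
    finally show ?thesis by (simp add: sum.distrib)
  qed
  finally show ?thesis using L1 X_def T_def by simp
qed

lemma eig1_const:
  fixes Q :: "'y::finite \<Rightarrow> 'y \<Rightarrow> real"
  assumes st: "stochastic_mat Q" and ir: "irreducible_mat Q" and f: "f \<in> eigsp Q 1"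
  shows "f y = f z"
proof -
  define M where "M = Max (range f)"
  have Mge: "f z \<le> M" for z unfolding M_def by (rule Max_ge) auto
  obtain y0 where y0: "f y0 = M"
  proof -
    have "M \<in> range f" unfolding M_def by (rule Max_in) auto
    then show ?thesis using that by auto
  qed
  have stp: "f v = M" if u: "f u = M" and q: "Q u v > 0" for u v
  proof -
    have eq: "(\<Sum>w\<in>UNIV. Q u w * f w) = f u" using f
      by (simp add: eigsp_def Qop_def fun_eq_iff)
    have s1: "(\<Sum>w\<in>UNIV. Q u w) = 1" using st by (simp add: stochastic_mat_def)
    have "(\<Sum>w\<in>UNIV. Q u w * (M - f w)) = (\<Sum>w\<in>UNIV. Q u w) * M - (\<Sum>w\<in>UNIV. Q u w * f w)"
      by (simp add: right_diff_distrib sum_subtractf sum_distrib_right)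
    also have "\<dots> = 0" using eq s1 u by simp
    finally have z: "(\<Sum>w\<in>UNIV. Q u w * (M - f w)) = 0" .
    have nn: "\<And>w. w \<in> UNIV \<Longrightarrow> 0 \<le> Q u w * (M - f w)"
      using st Mge by (auto simp: stochastic_mat_def)
    have "\<forall>w\<in>UNIV. Q u w * (M - f w) = 0" using sum_nonneg_eq_0_iff[of UNIV "\<lambda>w. Q u w * (M - f w)"] nn z by simp
    then have "Q u v * (M - f v) = 0" by blast
    then show ?thesis using q by simp
  qed
  have all: "f z = M" for z
  proof -
    have "(y0, z) \<in> {(u, v). Q u v > 0}\<^sup>*" using ir by (simp add: irreducible_mat_def)
    then show ?thesis
    proof (induction rule: rtrancl_induct)
      case base then show ?case using y0 .
    next
      case (step v w) then show ?case using stp by auto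
    qed
  qed
  show ?thesis using all[of y] all[of z] by simp
qed

lemma eig_sum0:
  fixes Q :: "'y::finite \<Rightarrow> 'y \<Rightarrow> real"
  assumes sy: "symmetric_mat Q" and st: "stochastic_mat Q" and f: "f \<in> eigsp Q c" and c: "c \<noteq> 1"
  shows "(\<Sum>y\<in>UNIV. f y) = 0"
proof -
  have "(\<Sum>y\<in>UNIV. Qop Q f y) = (\<Sum>y\<in>UNIV. \<Sum>w\<in>UNIV. Q y w * f w)" by (simp add: Qop_def)
  also have "\<dots> = (\<Sum>w\<in>UNIV. \<Sum>y\<in>UNIV. Q y w * f w)" by (rule sum.swap)
  also have "\<dots> = (\<Sum>w\<in>UNIV. (\<Sum>y\<in>UNIV. Q w y) * f w)"
    using sy by (simp add: sum_distrib_right symmetric_mat_def)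
  also have "\<dots> = (\<Sum>w\<in>UNIV. f w)" using st by (simp add: stochastic_mat_def)
  finally have a: "(\<Sum>y\<in>UNIV. Qop Q f y) = (\<Sum>w\<in>UNIV. f w)" .
  have "(\<Sum>y\<in>UNIV. Qop Q f y) = c * (\<Sum>y\<in>UNIV. f y)" using f
    by (simp add: eigsp_def sum_distrib_left)
  then have "(c - 1) * (\<Sum>y\<in>UNIV. f y) = 0" using a by (simp add: left_diff_distrib)
  then show ?thesis using c by simp
qed

lemma fund_K:
  fixes Q :: "'y::finite \<Rightarrow> 'y \<Rightarrow> real" and lam :: "nat \<Rightarrow> real" and m :: nat and idx :: "nat \<Rightarrow> nat"
  assumes sy: "symmetric_mat Q" and st: "stochastic_mat Q" and ir: "irreducible_mat Q"
    and lam0: "lam 0 = 1" and inj: "inj_on lam {..m}" and fA: "finite A"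
    and Fs: "\<forall>j\<in>A. idx j \<le> m \<and> Fs j \<in> eigsp Q (lam (idx j))"
  shows "(\<Sum>j\<in>dom \<theta>. \<Sum>y\<in>UNIV. tensor A Fs (\<theta>(j\<mapsto>y)))
       = real (card (UNIV::'y set)) * real (card {j\<in>A. idx j = 0}) * tensor A Fs \<theta>"
proof (cases "dom \<theta> = A")
  case False
  have "\<And>j y. j \<in> dom \<theta> \<Longrightarrow> tensor A Fs (\<theta>(j\<mapsto>y)) = 0"
    using False by (simp add: tensor_def insert_absorb)
  then show ?thesis using False by (simp add: tensor_def)
next
  case True
  define T where "T = tensor A Fs \<theta>"
  have tm: "(\<Sum>y\<in>UNIV. tensor A Fs (\<theta>(j\<mapsto>y)))
       = (if idx j = 0 then real (card (UNIV::'y set)) * T else 0)" if j: "j \<in> A" for j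
  proof -
    define P where "P = (\<Prod>i\<in>A-{j}. Fs i (the (\<theta> i)))"
    have tj: "tensor A Fs (\<theta>(j\<mapsto>y)) = Fs j y * P" for y
    proof -
      have "tensor A Fs (\<theta>(j\<mapsto>y)) = (\<Prod>i\<in>A. Fs i (the ((\<theta>(j\<mapsto>y)) i)))"
        using True j by (simp add: tensor_def insert_absorb)
      also have "\<dots> = Fs j y * (\<Prod>i\<in>A-{j}. Fs i (the ((\<theta>(j\<mapsto>y)) i)))"
        using prod.remove[OF fA j, of "\<lambda>i. Fs i (the ((\<theta>(j\<mapsto>y)) i))"] by simp
      also have "(\<Prod>i\<in>A-{j}. Fs i (the ((\<theta>(j\<mapsto>y)) i))) = P"
        unfolding P_def by (intro prod.cong refl) auto
      finally show ?thesis .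
    qed
    have T: "T = Fs j (the (\<theta> j)) * P"
      unfolding T_def P_def using True prod.remove[OF fA j] by (simp add: tensor_def)
    have "(\<Sum>y\<in>UNIV. tensor A Fs (\<theta>(j\<mapsto>y))) = (\<Sum>y\<in>UNIV. Fs j y) * P"
      by (simp add: tj sum_distrib_right)
    also have "\<dots> = (if idx j = 0 then real (card (UNIV::'y set)) * T else 0)"
    proof (cases "idx j = 0")
      case True
      then have "Fs j \<in> eigsp Q 1" using Fs j lam0 by auto
      then have "\<And>y. Fs j y = Fs j (the (\<theta> j))" using eig1_const[OF st ir] by blast
      then have "(\<Sum>y\<in>UNIV. Fs j y) = (\<Sum>y\<in>(UNIV::'y set). Fs j (the (\<theta> j)))"
        by (intro sum.cong) auto
      then have "(\<Sum>y\<in>UNIV. Fs j y) = real (card (UNIV::'y set)) * Fs j (the (\<theta> j))" by simp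
      then show ?thesis using True T by simp
    next
      case False
      have "idx j \<le> m" using Fs j by auto
      have "lam (idx j) \<noteq> lam 0"
      proof
        assume "lam (idx j) = lam 0"
        then have "idx j = 0" using inj_onD[OF inj, of "idx j" 0] \<open>idx j \<le> m\<close> by auto
        then show False using False by simp
      qed
      then have "(\<Sum>y\<in>UNIV. Fs j y) = 0" using eig_sum0[OF sy st] Fs j lam0 by auto
      then show ?thesis using False by simp
    qed
    finally show ?thesis .
  qed
  have "(\<Sum>j\<in>dom \<theta>. \<Sum>y\<in>UNIV. tensor A Fs (\<theta>(j\<mapsto>y)))
      = (\<Sum>j\<in>A. if idx j = 0 then real (card (UNIV::'y set)) * T else 0)"
    using True tm by simp
  also have "\<dots> = (\<Sum>j\<in>{j\<in>A. idx j = 0}. real (card (UNIV::'y set)) * T)"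
    using sum.inter_filter[OF fA, of "\<lambda>_. real (card (UNIV::'y set)) * T" "\<lambda>j. idx j = 0"] by simp
  also have "\<dots> = real (card (UNIV::'y set)) * real (card {j\<in>A. idx j = 0}) * T" by simp
  finally show ?thesis unfolding T_def .
qed

lemma fund_props:
  fixes Q :: "'y::finite \<Rightarrow> 'y \<Rightarrow> real" and lam :: "nat \<Rightarrow> real" and m :: nat
  assumes sy: "symmetric_mat Q" and st: "stochastic_mat Q" and ir: "irreducible_mat Q"
    and lam0: "lam 0 = 1" and inj: "inj_on lam {..m}" and fA: "finite A"
    and G: "fundamental Q lam m b A G"
  shows "(\<Sum>j\<in>dom \<theta>. \<Sum>y\<in>UNIV. G (\<theta>(j\<mapsto>y))) = real (card (UNIV::'y set)) * real (b 0) * G \<theta>"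
    and "dom \<theta> \<noteq> A \<Longrightarrow> G \<theta> = 0"
proof -
  obtain Fs idx where F: "\<forall>j\<in>A. idx j \<le> m \<and> Fs j \<in> eigsp Q (lam (idx j))"
    and c: "\<forall>i\<le>m. card {j\<in>A. idx j = i} = b i" and Gd: "G = tensor A Fs"
    using G unfolding fundamental_def by blast
  have "card {j\<in>A. idx j = 0} = b 0" using c by auto
  then show "(\<Sum>j\<in>dom \<theta>. \<Sum>y\<in>UNIV. G (\<theta>(j\<mapsto>y))) = real (card (UNIV::'y set)) * real (b 0) * G \<theta>"
    using fund_K[OF sy st ir lam0 inj fA F, of \<theta>] Gd by simp
  show "dom \<theta> \<noteq> A \<Longrightarrow> G \<theta> = 0" using Gd by (simp add: tensor_def)
qed

lemma Pspace_props:
  fixes Q :: "'y::finite \<Rightarrow> 'y \<Rightarrow> real" and lam :: "nat \<Rightarrow> real" and m :: nat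
  assumes sy: "symmetric_mat Q" and st: "stochastic_mat Q" and ir: "irreducible_mat Q"
    and lam0: "lam 0 = 1" and inj: "inj_on lam {..m}" and fA: "finite A"
    and F: "F \<in> Pspace Q lam m b A"
  shows "(\<Sum>j\<in>dom \<theta>. \<Sum>y\<in>UNIV. F (\<theta>(j\<mapsto>y))) = real (card (UNIV::'y set)) * real (b 0) * F \<theta>"
    and "dom \<theta> \<noteq> A \<Longrightarrow> F \<theta> = 0"
proof -
  obtain S c where S: "finite S" "S \<subseteq> {G. fundamental Q lam m b A G}"
    and Fd: "F = (\<lambda>\<theta>. \<Sum>G\<in>S. c G * G \<theta>)"
    using F unfolding Pspace_def by blast
  have fp: "G \<in> S \<Longrightarrow> fundamental Q lam m b A G" for G using S by auto
  have "(\<Sum>j\<in>dom \<theta>. \<Sum>y\<in>UNIV. \<Sum>G\<in>S. c G * G (\<theta>(j\<mapsto>y)))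
      = (\<Sum>j\<in>dom \<theta>. \<Sum>G\<in>S. \<Sum>y\<in>UNIV. c G * G (\<theta>(j\<mapsto>y)))"
    by (intro sum.cong refl sum.swap)
  also have "\<dots> = (\<Sum>G\<in>S. \<Sum>j\<in>dom \<theta>. \<Sum>y\<in>UNIV. c G * G (\<theta>(j\<mapsto>y)))"
    by (rule sum.swap)
  also have "\<dots> = (\<Sum>G\<in>S. c G * (real (card (UNIV::'y set)) * real (b 0) * G \<theta>))"
  proof (intro sum.cong refl)
    fix G assume "G \<in> S"
    then show "(\<Sum>j\<in>dom \<theta>. \<Sum>y\<in>UNIV. c G * G (\<theta>(j\<mapsto>y))) = c G * (real (card (UNIV::'y set)) * real (b 0) * G \<theta>)"
    proof -
      have "(\<Sum>j\<in>dom \<theta>. \<Sum>y\<in>UNIV. c G * G (\<theta>(j\<mapsto>y))) = c G * (\<Sum>j\<in>dom \<theta>. \<Sum>y\<in>UNIV. G (\<theta>(j\<mapsto>y)))"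
        by (simp add: sum_distrib_left)
      then show ?thesis using fund_props(1)[OF sy st ir lam0 inj fA fp, of G \<theta>] \<open>G \<in> S\<close> by simp
    qed
  qed
  also have "\<dots> = real (card (UNIV::'y set)) * real (b 0) * (\<Sum>G\<in>S. c G * G \<theta>)"
    by (simp add: sum_distrib_left mult_ac)
  finally show "(\<Sum>j\<in>dom \<theta>. \<Sum>y\<in>UNIV. F (\<theta>(j\<mapsto>y))) = real (card (UNIV::'y set)) * real (b 0) * F \<theta>"
    using Fd by simp
  show "dom \<theta> \<noteq> A \<Longrightarrow> F \<theta> = 0"
    using fund_props(2)[OF sy st ir lam0 inj fA fp] Fd by (simp add: sum.neutral)
qed

theorem corollary7p6:
  fixes Q :: "'y::finite \<Rightarrow> 'y \<Rightarrow> real"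
    and lam :: "nat \<Rightarrow> real" and m n k :: nat and a :: "nat \<Rightarrow> nat"
    and A :: "nat set" and F :: "(nat \<rightharpoonup> 'y) \<Rightarrow> real"
  assumes "symmetric_mat Q" and "stochastic_mat Q" and "irreducible_mat Q"
    and "lam 0 = 1" and "inj_on lam {..m}"
    and "lam ` {..m} = {\<mu>. is_eigenvalue Q \<mu>}"
    and "2 \<le> k" and "k \<le> n - 1"
    and "(\<Sum>i\<le>m. a i) = k + 1" and "a 0 \<ge> 1"
    and "A \<subseteq> {1..n}" and "card A = k"
    and "F \<in> Pspace Q lam m (a(0 := a 0 - 1)) A"
  shows "(\<lambda>\<theta>. Dop n (k + 1) (Dstar n (k + 1) F) \<theta> - Dstar n k (Dop n k F) \<theta>)
       = (\<lambda>\<theta>. real (card (UNIV :: 'y set)) * (real n + real (ell m a) - 2 * real k) * F \<theta>)"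
proof
  fix \<theta>
  note sy = assms(1) and st = assms(2) and ir = assms(3) and lam0 = assms(4) and inj = assms(5)
  have fA: "finite A" using assms(11) finite_subset by blast
  note PP = Pspace_props[OF sy st ir lam0 inj fA assms(13)]
  obtain k0 where k0: "k = Suc k0" using assms(7) by (cases k) auto
  have kn: "k \<le> n" using assms(7,8) by simp
  have ell: "real (ell m a) = real k + 1 - real (a 0)"
  proof -
    have "{..m} = insert 0 {1..m}" by auto
    then have "(\<Sum>i\<le>m. a i) = a 0 + (\<Sum>i\<in>{1..m}. a i)" by simp
    then have "ell m a + a 0 = k + 1" using assms(9) by (simp add: ell_def)
    then show ?thesis by (metis of_nat_add of_nat_1 add_diff_cancel_right')
  qed
  show "Dop n (k + 1) (Dstar n (k + 1) F) \<theta> - Dstar n k (Dop n k F) \<theta>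
       = real (card (UNIV :: 'y set)) * (real n + real (ell m a) - 2 * real k) * F \<theta>"
  proof (cases "\<theta> \<in> Theta n k")
    case True
    have "Dop n (k + 1) (Dstar n (k + 1) F) \<theta> - Dstar n k (Dop n k F) \<theta>
      = real (card ({1..n} - dom \<theta>)) * real (card (UNIV::'y set)) * F \<theta> - (\<Sum>j\<in>dom \<theta>. \<Sum>y\<in>UNIV. F (\<theta>(j\<mapsto>y)))"
      using main_comb[of \<theta> n k0 F] True k0 by simp
    also have "card ({1..n} - dom \<theta>) = n - k"
      using True by (simp add: Theta_def card_Diff_subset theta_fin[OF True])
    also have "(\<Sum>j\<in>dom \<theta>. \<Sum>y\<in>UNIV. F (\<theta>(j\<mapsto>y))) = real (card (UNIV::'y set)) * real (a 0 - 1) * F \<theta>"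
      using PP(1) by simp
    finally have L: "Dop n (k + 1) (Dstar n (k + 1) F) \<theta> - Dstar n k (Dop n k F) \<theta>
      = real (n - k) * real (card (UNIV::'y set)) * F \<theta> - real (card (UNIV::'y set)) * real (a 0 - 1) * F \<theta>" .
    have "real (n - k) * real (card (UNIV::'y set)) * F \<theta> - real (card (UNIV::'y set)) * real (a 0 - 1) * F \<theta>
      = real (card (UNIV :: 'y set)) * (real n + real (ell m a) - 2 * real k) * F \<theta>"
      unfolding ell using kn assms(10) by (simp add: of_nat_diff algebra_simps)
    then show ?thesis using L by simp
  next
    case False
    have "dom \<theta> \<noteq> A" using False assms(11,12) by (auto simp: Theta_def)
    then have "F \<theta> = 0" using PP(2) by simp
    moreover have "Dop n (k + 1) (Dstar n (k + 1) F) \<theta> = 0" using False by (simp add: Dop_def)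
    moreover have "Dstar n k (Dop n k F) \<theta> = 0" using False by (simp add: Dstar_def)
    ultimately show ?thesis by simp
  qed
qed

end
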